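(* Let $\mathcal{X},\mathcal{Y}$ be disjoint finite sets of Boolean variables, $alive\notin\mathcal{X}\cup\mathcal{Y}$ a fresh variable, $\psi_A$ an LTL formula over $\mathcal{X}\cup\mathcal{Y}$, $\phi$ an LTLf formula over $\mathcal{X}\cup\mathcal{Y}$, and $\psi=t(\phi)\wedge alive\wedge(alive\ U\ (G\neg alive))$. Then $\phi$ is realizable with respect to $\langle\mathcal{X},\mathcal{Y}\rangle$ under assumption $\psi_A$ if and only if the LTL formula $\psi_A\rightarrow\psi$ is realizable with respect to $\langle\mathcal{X},\mathcal{Y}\cup\{alive\}\rangle$.
   Context: LTLf formulas: $\phi ::= a \mid \neg\phi \mid \phi_1\wedge\phi_2 \mid X\phi \mid \phi_1 U\phi_2$ with the finite-trace semantics: $\rho,i\models X\phi$ iff $i+1<|\rho|$ and $\rho,i+1\models\phi$; $\rho,i\models\phi_1U\phi_2$ iff there is $j$ with $i\le j<|\rho|$, $\rho,j\models\phi_2$ and $\rho,k\models\phi_1$ for $i\le k<j$; atoms and Boolean connectives as usual; $\rho\models\phi$ iff $\rho,0\models\phi$. LTL: same syntax plus $F,G$, standard semantics over infinite traces. Translation $t$: $t(a)=a$; $t(\neg\phi_1)=\neg t(\phi_1)$; $t(\phi_1\wedge\phi_2)=t(\phi_1)\wedge t(\phi_2)$; $t(X\phi)=X(alive\wedge t(\phi))$; $t(\phi_1U\phi_2)=t(\phi_1)\,U\,(alive\wedge t(\phi_2))$. Realizability under assumption: $\phi$ is realizable with respect to $\langle\mathcal{X},\mathcal{Y}\rangle$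 under assumption $\psi_A$ if there is $g:(2^{\mathcal{X}})^+\to 2^{\mathcal{Y}}$ such that for every $\lambda=X_0,X_1,\ldots\in(2^{\mathcal{X}})^\omega$, if the infinite trace $\rho=(X_0\cup g(X_0)),(X_1\cup g(X_0,X_1)),\ldots$ satisfies $\psi_A$, then there is $k\ge0$ with $\phi$ true in the finite prefix $(X_0\cup g(X_0)),\ldots,(X_k\cup g(X_0,\ldots,X_k))$. LTL realizability: an LTL formula $\Psi$ over $\mathcal{X}\cup\mathcal{Y}'$ ($\mathcal{X},\mathcal{Y}'$ disjoint) is realizable with respect to $\langle\mathcal{X},\mathcal{Y}'\rangle$ if there is $f:(2^{\mathcal{X}})^+\to 2^{\mathcal{Y}'}$ such that for every $\lambda=X_0,X_1,\ldots\in(2^{\mathcal{X}})^\omega$, $\Psi$ holds on the infinite trace $(X_0\cup f(X_0)),(X_1\cup f(X_0,X_1)),(X_2\cup f(X_0,X_1,X_2)),\ldots$. *)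

theory Defs
  imports Main
begin

datatype 'a ltlf =
    FAtom 'a
  | FNot "'a ltlf"
  | FAnd "'a ltlf" "'a ltlf"
  | FNext "'a ltlf"
  | FUntil "'a ltlf" "'a ltlf"

(* a finite trace is a list of states; a state is the set of true variables *)
fun ltlf_sat :: "'a set list \<Rightarrow> nat \<Rightarrow> 'a ltlf \<Rightarrow> bool" where
  "ltlf_sat \<rho> i (FAtom a) = (a \<in> \<rho> ! i)"
| "ltlf_sat \<rho> i (FNot \<phi>) = (\<not> ltlf_sat \<rho> i \<phi>)"
| "ltlf_sat \<rho> i (FAnd \<phi>1 \<phi>2) = (ltlf_sat \<rho> i \<phi>1 \<and> ltlf_sat \<rho> i \<phi>2)"
| "ltlf_sat \<rho> i (FNext \<phi>) = (i + 1 < length \<rho> \<and> ltlf_sat \<rho> (i + 1) \<phi>)"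
| "ltlf_sat \<rho> i (FUntil \<phi>1 \<phi>2) =
     (\<exists>j. i \<le> j \<and> j < length \<rho> \<and> ltlf_sat \<rho> j \<phi>2 \<and>
          (\<forall>k. i \<le> k \<and> k < j \<longrightarrow> ltlf_sat \<rho> k \<phi>1))"

definition ltlf_models :: "'a set list \<Rightarrow> 'a ltlf \<Rightarrow> bool" where
  "ltlf_models \<rho> \<phi> = ltlf_sat \<rho> 0 \<phi>"

fun ltlf_atoms :: "'a ltlf \<Rightarrow> 'a set" where
  "ltlf_atoms (FAtom a) = {a}"
| "ltlf_atoms (FNot \<phi>) = ltlf_atoms \<phi>"
| "ltlf_atoms (FAnd \<phi>1 \<phi>2) = ltlf_atoms \<phi>1 \<union> ltlf_atoms \<phi>2"
| "ltlf_atoms (FNext \<phi>) = ltlf_atoms \<phi>"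
| "ltlf_atoms (FUntil \<phi>1 \<phi>2) = ltlf_atoms \<phi>1 \<union> ltlf_atoms \<phi>2"

datatype 'a ltl =
    Atom 'a
  | Not "'a ltl"
  | And "'a ltl" "'a ltl"
  | Next "'a ltl"
  | Until "'a ltl" "'a ltl"
  | Eventually "'a ltl"
  | Globally "'a ltl"

fun ltl_sat :: "(nat \<Rightarrow> 'a set) \<Rightarrow> nat \<Rightarrow> 'a ltl \<Rightarrow> bool" where
  "ltl_sat \<rho> i (Atom a) = (a \<in> \<rho> i)"
| "ltl_sat \<rho> i (Not \<phi>) = (\<not> ltl_sat \<rho> i \<phi>)"
| "ltl_sat \<rho> i (And \<phi>1 \<phi>2) = (ltl_sat \<rho> i \<phi>1 \<and> ltl_sat \<rho> i \<phi>2)"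
| "ltl_sat \<rho> i (Next \<phi>) = ltl_sat \<rho> (i + 1) \<phi>"
| "ltl_sat \<rho> i (Until \<phi>1 \<phi>2) =
     (\<exists>j\<ge>i. ltl_sat \<rho> j \<phi>2 \<and> (\<forall>k. i \<le> k \<and> k < j \<longrightarrow> ltl_sat \<rho> k \<phi>1))"
| "ltl_sat \<rho> i (Eventually \<phi>) = (\<exists>j\<ge>i. ltl_sat \<rho> j \<phi>)"
| "ltl_sat \<rho> i (Globally \<phi>) = (\<forall>j\<ge>i. ltl_sat \<rho> j \<phi>)"

definition ltl_models :: "(nat \<Rightarrow> 'a set) \<Rightarrow> 'a ltl \<Rightarrow> bool" where
  "ltl_models \<rho> \<phi> = ltl_sat \<rho> 0 \<phi>"

fun ltl_atoms :: "'a ltl \<Rightarrow> 'a set" where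
  "ltl_atoms (Atom a) = {a}"
| "ltl_atoms (Not \<phi>) = ltl_atoms \<phi>"
| "ltl_atoms (And \<phi>1 \<phi>2) = ltl_atoms \<phi>1 \<union> ltl_atoms \<phi>2"
| "ltl_atoms (Next \<phi>) = ltl_atoms \<phi>"
| "ltl_atoms (Until \<phi>1 \<phi>2) = ltl_atoms \<phi>1 \<union> ltl_atoms \<phi>2"
| "ltl_atoms (Eventually \<phi>) = ltl_atoms \<phi>"
| "ltl_atoms (Globally \<phi>) = ltl_atoms \<phi>"

definition Implies :: "'a ltl \<Rightarrow> 'a ltl \<Rightarrow> 'a ltl" where
  "Implies \<phi>1 \<phi>2 = Not (And \<phi>1 (Not \<phi>2))"

fun transl :: "'a \<Rightarrow> 'a ltlf \<Rightarrow> 'a ltl" where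
  "transl alive (FAtom a) = Atom a"
| "transl alive (FNot \<phi>) = Not (transl alive \<phi>)"
| "transl alive (FAnd \<phi>1 \<phi>2) = And (transl alive \<phi>1) (transl alive \<phi>2)"
| "transl alive (FNext \<phi>) = Next (And (Atom alive) (transl alive \<phi>))"
| "transl alive (FUntil \<phi>1 \<phi>2) =
     Until (transl alive \<phi>1) (And (Atom alive) (transl alive \<phi>2))"

definition psi_of :: "'a \<Rightarrow> 'a ltlf \<Rightarrow> 'a ltl" where
  "psi_of alive \<phi> =
     And (transl alive \<phi>)
         (And (Atom alive) (Until (Atom alive) (Globally (Not (Atom alive)))))"

(* a strategy g : (2^X)^+ \<rightarrow> 2^Y, represented as a total function on lists,
   constrained on nonempty lists of subsets of X *)
definition is_strategy :: "'a set \<Rightarrow> 'a set \<Rightarrow> ('a set list \<Rightarrow> 'a set) \<Rightarrow> bool" where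
  "is_strategy X Y g \<longleftrightarrow>
     (\<forall>ls. ls \<noteq> [] \<and> set ls \<subseteq> Pow X \<longrightarrow> g ls \<subseteq> Y)"

definition is_input :: "'a set \<Rightarrow> (nat \<Rightarrow> 'a set) \<Rightarrow> bool" where
  "is_input X lam \<longleftrightarrow> (\<forall>i. lam i \<subseteq> X)"

definition play :: "('a set list \<Rightarrow> 'a set) \<Rightarrow> (nat \<Rightarrow> 'a set) \<Rightarrow> nat \<Rightarrow> 'a set" where
  "play g lam i = lam i \<union> g (map lam [0..<Suc i])"

definition play_prefix :: "('a set list \<Rightarrow> 'a set) \<Rightarrow> (nat \<Rightarrow> 'a set) \<Rightarrow> nat \<Rightarrow> 'a set list" where
  "play_prefix g lam k = map (play g lam) [0..<Suc k]"

definition ltlf_realizable_under ::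
  "'a set \<Rightarrow> 'a set \<Rightarrow> 'a ltl \<Rightarrow> 'a ltlf \<Rightarrow> bool" where
  "ltlf_realizable_under X Y \<psi>A \<phi> \<longleftrightarrow>
     (\<exists>g. is_strategy X Y g \<and>
        (\<forall>lam. is_input X lam \<longrightarrow> ltl_models (play g lam) \<psi>A \<longrightarrow>
              (\<exists>k. ltlf_models (play_prefix g lam k) \<phi>)))"

definition ltl_realizable :: "'a set \<Rightarrow> 'a set \<Rightarrow> 'a ltl \<Rightarrow> bool" where
  "ltl_realizable X Y' \<Psi> \<longleftrightarrow>
     (\<exists>f. is_strategy X Y' f \<and>
        (\<forall>lam. is_input X lam \<longrightarrow> ltl_models (play f lam) \<Psi>))"

end

theory Submission
  imports Defs
begin

lemma ltl_agree:
  assumes "\<And>i a. a \<in> ltl_atoms \<psi> \<Longrightarrow> (a \<in> \<rho> i \<longleftrightarrow> a \<in> \<rho>' i)"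
  shows "ltl_sat \<rho> i \<psi> = ltl_sat \<rho>' i \<psi>"
  using assms by (induction \<psi> arbitrary: i) auto

lemma transl_correct:
  assumes len: "length w = Suc K"
    and al: "\<And>i. alive \<in> \<rho> i \<longleftrightarrow> i \<le> K"
    and ag: "\<And>i a. i \<le> K \<Longrightarrow> a \<in> ltlf_atoms \<phi> \<Longrightarrow> (a \<in> \<rho> i \<longleftrightarrow> a \<in> w ! i)"
    and i: "i \<le> K"
  shows "ltl_sat \<rho> i (transl alive \<phi>) = ltlf_sat w i \<phi>"
  using ag i
proof (induction \<phi> arbitrary: i)
  case (FAtom x) then show ?case by simp
next
  case (FNot \<phi>) then show ?case by simp
next
  case (FAnd \<phi>1 \<phi>2) then show ?case by simp
next
  case (FNext \<phi>)
  show ?case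
  proof (cases "i + 1 \<le> K")
    case True
    then show ?thesis using FNext len al by auto
  next
    case False
    then show ?thesis using len al by auto
  qed
next
  case (FUntil \<phi>1 \<phi>2)
  have IH1: "\<And>k. k \<le> K \<Longrightarrow> ltl_sat \<rho> k (transl alive \<phi>1) = ltlf_sat w k \<phi>1"
    using FUntil by auto
  have IH2: "\<And>k. k \<le> K \<Longrightarrow> ltl_sat \<rho> k (transl alive \<phi>2) = ltlf_sat w k \<phi>2"
    using FUntil by auto
  show ?case
  proof
    assume "ltl_sat \<rho> i (transl alive (FUntil \<phi>1 \<phi>2))"
    then obtain j where j: "j \<ge> i" "alive \<in> \<rho> j" "ltl_sat \<rho> j (transl alive \<phi>2)"
      "\<forall>k. i \<le> k \<and> k < j \<longrightarrow> ltl_sat \<rho> k (transl alive \<phi>1)" by auto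
    have "j \<le> K" using j(2) al by auto
    then show "ltlf_sat w i (FUntil \<phi>1 \<phi>2)" using j IH1 IH2 len
      by (auto intro!: exI[of _ j])
  next
    assume "ltlf_sat w i (FUntil \<phi>1 \<phi>2)"
    then obtain j where j: "i \<le> j" "j < length w" "ltlf_sat w j \<phi>2"
      "\<forall>k. i \<le> k \<and> k < j \<longrightarrow> ltlf_sat w k \<phi>1" by auto
    have "j \<le> K" using j(2) len by auto
    then show "ltl_sat \<rho> i (transl alive (FUntil \<phi>1 \<phi>2))" using j IH1 IH2 al
      by (auto intro!: exI[of _ j])
  qed
qed

lemma prefix_len: "length (play_prefix g lam K) = Suc K"
  by (simp add: play_prefix_def)

lemma prefix_nth: "i \<le> K \<Longrightarrow> play_prefix g lam K ! i = play g lam i"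
  by (simp add: play_prefix_def del: upt_Suc)

theorem mainTheorem10:
  fixes X Y :: "'a set" and alive :: 'a and \<psi>A :: "'a ltl" and \<phi> :: "'a ltlf"
  assumes "finite X" and "finite Y" and "X \<inter> Y = {}"
    and "alive \<notin> X \<union> Y"
    and "ltl_atoms \<psi>A \<subseteq> X \<union> Y"
    and "ltlf_atoms \<phi> \<subseteq> X \<union> Y"
  shows "ltlf_realizable_under X Y \<psi>A \<phi> \<longleftrightarrow>
         ltl_realizable X (Y \<union> {alive}) (Implies \<psi>A (psi_of alive \<phi>))"
proof
  assume "ltlf_realizable_under X Y \<psi>A \<phi>"
  then obtain g where gs: "is_strategy X Y g" and
    gr: "\<And>lam. is_input X lam \<Longrightarrow> ltl_models (play g lam) \<psi>A \<Longrightarrow>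
              (\<exists>k. ltlf_models (play_prefix g lam k) \<phi>)"
    unfolding ltlf_realizable_under_def by blast
  define f where "f ls = g ls \<union> (if (\<forall>k. k+1 < length ls \<longrightarrow>
      \<not> ltlf_models (map (\<lambda>i. ls!i \<union> g (take (Suc i) ls)) [0..<Suc k]) \<phi>)
      then {alive} else {})" for ls
  have fs: "is_strategy X (Y \<union> {alive}) f"
    using gs unfolding is_strategy_def f_def by auto
  have "ltl_models (play f lam) (Implies \<psi>A (psi_of alive \<phi>))" if inp: "is_input X lam" for lam
  proof -
    have gsub: "g (map lam [0..<Suc n]) \<subseteq> Y" for n
    proof -
      have "map lam [0..<Suc n] \<noteq> []" "set (map lam [0..<Suc n]) \<subseteq> Pow X"
        using inp unfolding is_input_def by (auto simp del: upt_Suc)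
      then show ?thesis using gs unfolding is_strategy_def by blast
    qed
    have lsub: "lam n \<subseteq> X" for n using inp unfolding is_input_def by auto
    have inner: "map (\<lambda>i. map lam [0..<Suc n] ! i \<union> g (take (Suc i) (map lam [0..<Suc n]))) [0..<Suc k]
        = play_prefix g lam k" if "k < n" for k n
    proof -
      have "\<And>i. i < Suc k \<Longrightarrow> take (Suc i) (map lam [0..<Suc n]) = map lam [0..<Suc i]"
        using that by (simp add: take_map del: upt_Suc)
      moreover have "\<And>i. i < Suc k \<Longrightarrow> map lam [0..<Suc n] ! i = lam i"
        using that by (simp del: upt_Suc add: nth_map)
      ultimately show ?thesis unfolding play_prefix_def play_def
        by (intro map_cong) (auto simp del: upt_Suc)
    qed
    have alive_iff: "alive \<in> play f lam n \<longleftrightarrow> (\<forall>k<n. \<not> ltlf_models (play_prefix g lam k) \<phi>)" for n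
    proof -
      have "alive \<notin> lam n" "alive \<notin> g (map lam [0..<Suc n])"
        using lsub gsub assms(4) by auto
      then show ?thesis unfolding play_def f_def using inner[of _ n]
        by (auto simp del: upt_Suc)
    qed
    have agree: "a \<in> play f lam i \<longleftrightarrow> a \<in> play g lam i" if "a \<noteq> alive" for a i
      using that unfolding play_def f_def by auto
    show ?thesis
    proof (cases "ltl_models (play f lam) \<psi>A")
      case False then show ?thesis by (simp add: ltl_models_def Implies_def)
    next
      case True
      have "ltl_models (play g lam) \<psi>A"
      proof -
        have "\<And>i a. a \<in> ltl_atoms \<psi>A \<Longrightarrow> (a \<in> play f lam i \<longleftrightarrow> a \<in> play g lam i)"
          proof -
          fix i a assume "a \<in> ltl_atoms \<psi>A"
          then have "a \<noteq> alive" using assms(4,5) by blast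
          then show "a \<in> play f lam i \<longleftrightarrow> a \<in> play g lam i" by (rule agree)
        qed
        then show ?thesis using True ltl_agree[of \<psi>A "play f lam" "play g lam" 0]
          unfolding ltl_models_def by blast
      qed
      then obtain k where "ltlf_models (play_prefix g lam k) \<phi>" using gr inp by blast
      define K where "K = (LEAST k. ltlf_models (play_prefix g lam k) \<phi>)"
      have K: "ltlf_models (play_prefix g lam K) \<phi>"
        unfolding K_def by (rule LeastI) fact
      have al: "alive \<in> play f lam n \<longleftrightarrow> n \<le> K" for n
      proof
        assume "alive \<in> play f lam n"
        then have "\<forall>k<n. \<not> ltlf_models (play_prefix g lam k) \<phi>" using alive_iff by blast
        then show "n \<le> K" using K by (meson not_le)
      next
        assume "n \<le> K"
        have "\<not> ltlf_models (play_prefix g lam k) \<phi>" if "k < n" for k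
          using not_less_Least[of k "\<lambda>k. ltlf_models (play_prefix g lam k) \<phi>"] that \<open>n \<le> K\<close>
          unfolding K_def by linarith
        then show "alive \<in> play f lam n" using alive_iff by blast
      qed
      have tr: "ltl_sat (play f lam) 0 (transl alive \<phi>) = ltlf_sat (play_prefix g lam K) 0 \<phi>"
      proof (rule transl_correct[OF prefix_len al])
        fix i a assume "i \<le> K" "a \<in> ltlf_atoms \<phi>"
        then show "a \<in> play f lam i \<longleftrightarrow> a \<in> play_prefix g lam K ! i"
        proof -
          have "a \<noteq> alive" using \<open>a \<in> ltlf_atoms \<phi>\<close> assms(4,6) by blast
          then have "a \<in> play f lam i \<longleftrightarrow> a \<in> play g lam i" by (rule agree)
          then show ?thesis unfolding prefix_nth[OF \<open>i \<le> K\<close>] .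
        qed
      qed simp
      have u: "ltl_sat (play f lam) 0 (Until (Atom alive) (Globally (Not (Atom alive))))"
      proof -
        have "ltl_sat (play f lam) (Suc K) (Globally (Not (Atom alive)))"
          using al by simp
        moreover have "\<forall>k. 0 \<le> k \<and> k < Suc K \<longrightarrow> ltl_sat (play f lam) k (Atom alive)"
          using al by simp
        ultimately show ?thesis by (simp only: ltl_sat.simps; blast)
      qed
      have a0: "ltl_sat (play f lam) 0 (Atom alive)" using al[of 0] by simp
      have t0: "ltl_sat (play f lam) 0 (transl alive \<phi>)" using tr K by (simp add: ltlf_models_def)
      have "ltl_sat (play f lam) 0 (psi_of alive \<phi>)"
        unfolding psi_of_def using t0 a0 u by (simp only: ltl_sat.simps)
      then show ?thesis unfolding ltl_models_def Implies_def by (simp only: ltl_sat.simps; blast)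
    qed
  qed
  then show "ltl_realizable X (Y \<union> {alive}) (Implies \<psi>A (psi_of alive \<phi>))"
    unfolding ltl_realizable_def using fs by blast
next
  assume "ltl_realizable X (Y \<union> {alive}) (Implies \<psi>A (psi_of alive \<phi>))"
  then obtain f where fs: "is_strategy X (Y \<union> {alive}) f" and
    fr: "\<And>lam. is_input X lam \<Longrightarrow> ltl_models (play f lam) (Implies \<psi>A (psi_of alive \<phi>))"
    unfolding ltl_realizable_def by blast
  define g where "g ls = f ls - {alive}" for ls
  have gs: "is_strategy X Y g" using fs unfolding is_strategy_def g_def by auto
  have "\<exists>k. ltlf_models (play_prefix g lam k) \<phi>"
    if inp: "is_input X lam" and psa: "ltl_models (play g lam) \<psi>A" for lam
  proof -
    have agree: "a \<in> play f lam i \<longleftrightarrow> a \<in> play g lam i" if "a \<noteq> alive" for a i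
      using that unfolding play_def g_def by auto
    have "ltl_models (play f lam) \<psi>A"
    proof -
      have "\<And>i a. a \<in> ltl_atoms \<psi>A \<Longrightarrow> (a \<in> play f lam i \<longleftrightarrow> a \<in> play g lam i)"
        proof -
          fix i a assume "a \<in> ltl_atoms \<psi>A"
          then have "a \<noteq> alive" using assms(4,5) by blast
          then show "a \<in> play f lam i \<longleftrightarrow> a \<in> play g lam i" by (rule agree)
        qed
      then show ?thesis using psa ltl_agree[of \<psi>A "play f lam" "play g lam" 0]
        unfolding ltl_models_def by blast
    qed
    then have ps: "ltl_sat (play f lam) 0 (psi_of alive \<phi>)"
      using fr[OF inp] by (simp add: ltl_models_def Implies_def)
    then obtain j where j: "\<forall>m\<ge>j. alive \<notin> play f lam m" "\<forall>k<j. alive \<in> play f lam k"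
      and a0: "alive \<in> play f lam 0"
      by (auto simp: psi_of_def)
    then obtain K where jK: "j = Suc K" by (cases j) auto
    have al: "alive \<in> play f lam n \<longleftrightarrow> n \<le> K" for n
      using j jK by (cases "n \<le> K") auto
    have tr: "ltl_sat (play f lam) 0 (transl alive \<phi>) = ltlf_sat (play_prefix g lam K) 0 \<phi>"
    proof (rule transl_correct[OF prefix_len al])
      fix i a assume "i \<le> K" "a \<in> ltlf_atoms \<phi>"
      then show "a \<in> play f lam i \<longleftrightarrow> a \<in> play_prefix g lam K ! i"
      proof -
        have "a \<noteq> alive" using \<open>a \<in> ltlf_atoms \<phi>\<close> assms(4,6) by blast
        then have "a \<in> play f lam i \<longleftrightarrow> a \<in> play g lam i" by (rule agree)
        then show ?thesis unfolding prefix_nth[OF \<open>i \<le> K\<close>] .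
      qed
    qed simp
    then show ?thesis using ps by (auto simp: psi_of_def ltlf_models_def)
  qed
  then show "ltlf_realizable_under X Y \<psi>A \<phi>"
    unfolding ltlf_realizable_under_def using gs by blast
qed

end
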